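(* Let $\mathbf{M}=\{\mathbf{m}^{(1)},\ldots,\mathbf{m}^{(d)}\}$ be a blocking of $\mathcal{A}\in\mathbb{R}^{n_1\times\cdots\times n_d}$ with $\mathbf{m}^{(k)}=[m^{(k)}_1,\ldots,m^{(k)}_{b_k}]$, and suppose that for each $k$ the blocking is uniform: $m^{(k)}_1=\cdots=m^{(k)}_{b_k}=\mu_k$. For $k=1,\ldots,d$ let $N_k=n_1\cdots n_k$, $B_k=b_1\cdots b_k$, $D_k=\mu_1\cdots\mu_k$ (with $B_0=D_0=N_0=1$). Let $P_{\mathbf{M}}$ be the permutation matrix defined below. Then $P_{\mathbf{M}}=Q_d\cdots Q_2Q_1$ where \[ Q_k=\begin{cases} I_{N_d} & k=1,\\ I_{b_kN_d/N_k}\otimes \Pi_{\mu_k,B_{k-1}}\otimes I_{D_{k-1}} & 1<k\le d.\end{cases} \]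
   Context: Notation: for $\mathbf{n}=(n_1,\ldots,n_d)$ and $\mathbf{1}\le\mathbf{i}\le\mathbf{n}$ (componentwise), $\mathrm{ivec}(\mathbf{i},\mathbf{n})=i_1+(i_2-1)n_1+\cdots+(i_d-1)n_1\cdots n_{d-1}$. For positive integers $q,r$, $s=qr$, the perfect shuffle $\Pi_{q,r}\in\mathbb{R}^{s\times s}$ is the permutation matrix with $\Pi_{q,r}z=[z(1:r:s);z(2:r:s);\ldots;z(r:r:s)]$. $\otimes$ is the Kronecker product. A blocking of $\mathcal{A}$ is $\mathbf{M}=\{\mathbf{m}^{(1)},\ldots,\mathbf{m}^{(d)}\}$ with each $\mathbf{m}^{(k)}$ a vector of positive integers summing to $n_k$; for $\mathbf{M}_k=\{\mathbf{m}^{(1)},\ldots,\mathbf{m}^{(k)}\}$, $\mathrm{vol}_{\mathbf{M}_k}(\mathbf{i})=m^{(1)}_{i_1}\cdots m^{(k)}_{i_k}$. The permutation $P_{\mathbf{M}}$ is defined as $P_{\mathbf{M}}=\hat Q_d\cdots\hat Q_1$ where $\hat Q_1=I_{N_d}$ and, for $1<k\le d$, $\hat Q_k=I_{N_d/N_k}\otimes\Gamma^{(k)}$ with $\Gamma^{(k)}=\mathrm{diag}(\Gamma^{(k)}_1,\ldots,\Gamma^{(k)}_{b_k})$ and $\Gamma^{(k)}_j=\mathrm{diag}(\ldots,\Pi_{\mathrm{vol}_{\mathbf{M}_{k-1}}(\mathbf{i}),m^{(k)}_j},\ldots)\cdot\Pi_{m^{(k)}_j,N_{k-1}}$, the block diagonal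 having one block per multi-index $\mathbf{1}\le\mathbf{i}\le(b_1,\ldots,b_{k-1})$ ordered by increasing $\mathrm{ivec}(\mathbf{i},(b_1,\ldots,b_{k-1}))$. (This $P_{\mathbf{M}}$ is the permutation with $P_{\mathbf{M}}\mathrm{vec}(\mathcal{A})=\mathrm{vec}_{\mathbf{M}}(\mathcal{A})$, where $\mathrm{vec}$ lists entries in $\mathrm{ivec}$ order and $\mathrm{vec}_{\mathbf{M}}$ stacks the vecs of the blocks of $\mathcal{A}$ in $\mathrm{ivec}$ order of the block index.) *)

theory Defs
  imports "Jordan_Normal_Form.Matrix"
begin

text \<open>Conventions: modes are indexed 0..d-1 in Isabelle (paper mode k is Isabelle index k-1);
  matrix rows/columns are 0-based. A blocking M is a function giving for each mode k < d the
  list of block sizes m^(k+1).\<close>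

text \<open>Perfect shuffle Pi_{q,r}: (Pi z)(j*q + t) = z(j + t*r), for j<r, t<q (0-based).\<close>
definition perfect_shuffle :: "nat \<Rightarrow> nat \<Rightarrow> real mat" where
  "perfect_shuffle q r = mat (q*r) (q*r)
     (\<lambda>(i,j). if j = (i mod q) * r + i div q then 1 else 0)"

definition kron :: "real mat \<Rightarrow> real mat \<Rightarrow> real mat" where
  "kron A B = mat (dim_row A * dim_row B) (dim_col A * dim_col B)
     (\<lambda>(i,j). A $$ (i div dim_row B, j div dim_col B) * B $$ (i mod dim_row B, j mod dim_col B))"

definition is_blocking :: "nat \<Rightarrow> (nat \<Rightarrow> nat) \<Rightarrow> (nat \<Rightarrow> nat list) \<Rightarrow> bool" where
  "is_blocking d n M \<longleftrightarrow> (\<forall>k<d. M k \<noteq> [] \<and> (\<forall>x\<in>set (M k). 0 < x) \<and> sum_list (M k) = n k)"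

definition NN :: "(nat \<Rightarrow> nat list) \<Rightarrow> nat \<Rightarrow> nat" where
  "NN M k = (\<Prod>t<k. sum_list (M t))"

definition BB :: "(nat \<Rightarrow> nat list) \<Rightarrow> nat \<Rightarrow> nat" where
  "BB M k = (\<Prod>t<k. length (M t))"

text \<open>vol_{M_k}(i) where the multi-index i (over the first k modes) is the one with
  0-based ivec-linear index l (first index fastest).\<close>
definition vol :: "(nat \<Rightarrow> nat list) \<Rightarrow> nat \<Rightarrow> nat \<Rightarrow> nat" where
  "vol M k l = (\<Prod>t<k. M t ! ((l div BB M t) mod length (M t)))"

text \<open>Gamma^(k)_j for paper index k (1-based, mode index k-1) and 0-based block index j.\<close>
definition Gamma_blk :: "(nat \<Rightarrow> nat list) \<Rightarrow> nat \<Rightarrow> nat \<Rightarrow> real mat" where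
  "Gamma_blk M k j =
     diag_block_mat (map (\<lambda>l. perfect_shuffle (vol M (k-1) l) (M (k-1) ! j)) [0..<BB M (k-1)])
     * perfect_shuffle (M (k-1) ! j) (NN M (k-1))"

definition Gamma :: "(nat \<Rightarrow> nat list) \<Rightarrow> nat \<Rightarrow> real mat" where
  "Gamma M k = diag_block_mat (map (Gamma_blk M k) [0..<length (M (k-1))])"

definition Qhat :: "(nat \<Rightarrow> nat list) \<Rightarrow> nat \<Rightarrow> nat \<Rightarrow> real mat" where
  "Qhat M d k = (if k = 1 then 1\<^sub>m (NN M d)
                 else kron (1\<^sub>m (NN M d div NN M k)) (Gamma M k))"

fun mat_prod_desc :: "nat \<Rightarrow> (nat \<Rightarrow> real mat) \<Rightarrow> nat \<Rightarrow> real mat" where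
  "mat_prod_desc s F 0 = 1\<^sub>m s"
| "mat_prod_desc s F (Suc k) = F (Suc k) * mat_prod_desc s F k"

definition P_M :: "(nat \<Rightarrow> nat list) \<Rightarrow> nat \<Rightarrow> real mat" where
  "P_M M d = mat_prod_desc (NN M d) (Qhat M d) d"

definition Q_unif :: "(nat \<Rightarrow> nat list) \<Rightarrow> (nat \<Rightarrow> nat) \<Rightarrow> nat \<Rightarrow> nat \<Rightarrow> real mat" where
  "Q_unif M mu d k = (if k = 1 then 1\<^sub>m (NN M d)
     else kron (kron (1\<^sub>m (length (M (k-1)) * NN M d div NN M k))
                     (perfect_shuffle (mu (k-1)) (BB M (k-1))))
               (1\<^sub>m (\<Prod>t<k-1. mu t)))"

end

theory Submission
  imports Defs
begin

definition pm :: "nat \<Rightarrow> (nat \<Rightarrow> nat) \<Rightarrow> real mat" where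
  "pm n f = mat n n (\<lambda>(i,j). if j = f i then 1 else 0)"

lemma pm_eq: "n1 = n2 \<Longrightarrow> (\<And>i. i < n1 \<Longrightarrow> f i = g i) \<Longrightarrow> pm n1 f = pm n2 g"
  unfolding pm_def by (auto intro!: eq_matI)

lemma ps_pm: "perfect_shuffle q r = pm (q*r) (\<lambda>i. (i mod q) * r + i div q)"
  unfolding perfect_shuffle_def pm_def by simp

lemma one_pm: "1\<^sub>m n = pm n (\<lambda>i. i)"
  unfolding pm_def by (auto intro!: eq_matI)

lemma dim_pm[simp]: "dim_row (pm n f) = n" "dim_col (pm n f) = n"
  unfolding pm_def by auto

lemma index_pm[simp]: "i < n \<Longrightarrow> j < n \<Longrightarrow> pm n f $$ (i,j) = (if j = f i then 1 else 0)"
  unfolding pm_def by auto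

lemma kron_pm:
  assumes "\<And>i. i < b \<Longrightarrow> g i < b"
  shows "kron (pm a f) (pm b g) = pm (a*b) (\<lambda>i. f (i div b) * b + g (i mod b))"
proof (rule eq_matI)
  fix i j assume ij: "i < dim_row (pm (a*b) (\<lambda>i. f (i div b) * b + g (i mod b)))"
    "j < dim_col (pm (a*b) (\<lambda>i. f (i div b) * b + g (i mod b)))"
  hence i: "i < a*b" and j: "j < a*b" by auto
  hence bp: "b > 0" by (cases b) auto
  have id: "i div b < a" "j div b < a" using i j by (auto simp: less_mult_imp_div_less)
  have md: "i mod b < b" "j mod b < b" using bp by auto
  have gl: "g (i mod b) < b" using assms md by auto
  have eqv: "(j = f (i div b) * b + g (i mod b)) \<longleftrightarrow> (j div b = f (i div b) \<and> j mod b = g (i mod b))"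
  proof
    assume "j = f (i div b) * b + g (i mod b)"
    thus "j div b = f (i div b) \<and> j mod b = g (i mod b)" using gl bp by simp
  next
    assume "j div b = f (i div b) \<and> j mod b = g (i mod b)"
    thus "j = f (i div b) * b + g (i mod b)" by (metis div_mult_mod_eq)
  qed
  show "kron (pm a f) (pm b g) $$ (i, j) = pm (a * b) (\<lambda>i. f (i div b) * b + g (i mod b)) $$ (i, j)"
    using i j id md unfolding kron_def by (simp add: eqv)
qed (auto simp: kron_def)

lemma mult_pm:
  assumes "\<And>i. i < n \<Longrightarrow> f i < n"
  shows "pm n f * pm n g = pm n (\<lambda>i. g (f i))"
proof (rule eq_matI)
  fix i j assume "i < dim_row (pm n (\<lambda>i. g (f i)))" "j < dim_col (pm n (\<lambda>i. g (f i)))"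
  hence i: "i < n" and j: "j < n" by auto
  have "(pm n f * pm n g) $$ (i,j) = (\<Sum>k<n. pm n f $$ (i,k) * pm n g $$ (k,j))"
    using i j by (simp add: scalar_prod_def atLeast0LessThan)
  also have "\<dots> = (\<Sum>k<n. if k = f i then pm n g $$ (k,j) else 0)"
    by (rule sum.cong) (use i in auto)
  also have "\<dots> = pm n g $$ (f i, j)" using assms[OF i] by (simp add: sum.delta)
  finally show "(pm n f * pm n g) $$ (i,j) = pm n (\<lambda>i. g (f i)) $$ (i,j)"
    using i j assms[OF i] by simp
qed auto

lemma diag_rep_pm:
  assumes "\<And>i. i < b \<Longrightarrow> g i < b"
  shows "diag_block_mat (replicate m (pm b g)) = pm (m*b) (\<lambda>i. (i div b) * b + g (i mod b))"
proof (induction m)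
  case 0
  then show ?case unfolding pm_def by (auto intro!: eq_matI)
next
  case (Suc m)
  show ?case
  proof (rule eq_matI)
    fix i j assume "i < dim_row (pm (Suc m * b) (\<lambda>i. i div b * b + g (i mod b)))"
      "j < dim_col (pm (Suc m * b) (\<lambda>i. i div b * b + g (i mod b)))"
    hence i: "i < b + m*b" and j: "j < b + m*b" by auto
    hence bp: "b > 0" by (cases b) auto
    show "diag_block_mat (replicate (Suc m) (pm b g)) $$ (i, j) =
         pm (Suc m * b) (\<lambda>i. i div b * b + g (i mod b)) $$ (i, j)"
    proof (cases "i < b")
      case True
      then show ?thesis using i j assms[OF True] by (simp add: Suc Let_def)
    next
      case False
      have ib: "i - b < m*b" using i False by auto
      have e1: "(i - b) div b * b + g ((i - b) mod b) + b = i div b * b + g (i mod b)"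
        using False bp by (simp add: le_div_geq le_mod_geq)
      have gl: "g (i mod b) < b" using assms bp by auto
      show ?thesis
      proof (cases "j < b")
        case True
        have "j \<noteq> i div b * b + g (i mod b)"
        proof -
          have "i div b = (i - b) div b + 1" using False bp by (simp add: le_div_geq)
          hence "b \<le> i div b * b" by simp
          thus ?thesis using True by linarith
        qed
        then show ?thesis using i j False True by (simp add: Suc Let_def)
      next
        case jF: False
        have "(j - b = (i - b) div b * b + g ((i - b) mod b)) = (j = i div b * b + g (i mod b))"
          using e1 jF by auto
        then show ?thesis using i j ib False jF by (simp add: Suc Let_def)
      qed
    qed
  qed (auto simp: Suc Let_def)
qed


lemma G_arith:
  fixes r D mu B :: nat
  assumes "D > 0" "mu > 0" "B > 0"
  shows "((r div (D*mu))*(D*mu) + ((r mod (D*mu)) mod D * mu + (r mod (D*mu)) div D)) mod mu * (B*D)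
        + ((r div (D*mu))*(D*mu) + ((r mod (D*mu)) mod D * mu + (r mod (D*mu)) div D)) div mu
       = ((r div D) mod mu * B + (r div D) div mu) * D + r mod D"
proof -
  have q1: "(r mod (D*mu)) mod D = r mod D" by (simp add: mod_mod_cancel)
  have q2: "(r mod (D*mu)) div D = (r div D) mod mu"
    using assms by (simp add: mod_mult2_eq)
  have p: "r div (D*mu) = r div D div mu" by (simp add: div_mult2_eq)
  have e: "(r div (D*mu))*(D*mu) + ((r mod (D*mu)) mod D * mu + (r mod (D*mu)) div D)
      = (r div D) mod mu + (r div D div mu * D + r mod D) * mu"
    unfolding q1 q2 p by (simp add: algebra_simps)
  have w: "(r div D) mod mu < mu" using assms by simp
  have d1: "((r div D) mod mu + (r div D div mu * D + r mod D) * mu) div mu = r div D div mu * D + r mod D"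
    using w assms by simp
  have d2: "((r div D) mod mu + (r div D div mu * D + r mod D) * mu) mod mu = (r div D) mod mu"
    using w assms by simp
  show ?thesis unfolding e d1 d2 by (simp add: algebra_simps)
qed

lemma outer_arith:
  fixes i b s D mu B :: nat and G :: "nat \<Rightarrow> nat"
  assumes "D > 0" "mu > 0" "B > 0" "b > 0" "s = mu*B*D"
    and G: "\<And>r. r < s \<Longrightarrow> G r = ((r div D) mod mu * B + (r div D) div mu) * D + r mod D"
  shows "(i div (b*s))*(b*s) + (((i mod (b*s)) div s)*s + G ((i mod (b*s)) mod s))
     = ((i div D) div (mu*B)*(mu*B) + (((i div D) mod (mu*B)) mod mu * B + ((i div D) mod (mu*B)) div mu))*D + i mod D"
proof -
  have sp: "s > 0" using assms by simp
  have l1: "(i div (b*s))*(b*s) + ((i mod (b*s)) div s)*s = (i div s)*s"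
  proof -
    have "i div s = i div s div b * b + i div s mod b" by simp
    moreover have "i div (b*s) = i div s div b" by (metis div_mult2_eq mult.commute)
    moreover have "(i mod (b*s)) div s = i div s mod b"
    proof -
      have "i mod (b*s) = s*(i div s mod b) + i mod s" by (metis mod_mult2_eq mult.commute)
      thus ?thesis using sp by simp
    qed
    ultimately show ?thesis by (metis add_mult_distrib mult.assoc)
  qed
  have l2: "(i mod (b*s)) mod s = i mod s" by (simp add: mod_mod_cancel)
  have r1: "(i div D) div (mu*B) = i div s"
  proof -
    have "(i div D) div (mu*B) = i div (D*(mu*B))" by (rule div_mult2_eq[symmetric])
    also have "D*(mu*B) = s" using assms by simp
    finally show ?thesis .
  qed
  have r2: "(i div D) mod (mu*B) = (i mod s) div D"
  proof -
    have "i mod (D*(mu*B)) = D*((i div D) mod (mu*B)) + i mod D" by (rule mod_mult2_eq)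
    moreover have "D*(mu*B) = s" using assms by simp
    ultimately show ?thesis using assms by simp
  qed
  have r3: "i mod D = (i mod s) mod D" using assms by (simp add: mod_mod_cancel)
  have r4: "(i mod s) div D < mu*B" using assms
    by (metis r2 mod_less_divisor mult_pos_pos)
  have "(i mod s) div D mod mu * B + (i mod s) div D div mu = (i mod s) div D mod (mu*B) mod mu * B + (i mod s) div D mod (mu*B) div mu"
    using r4 by simp
  show ?thesis
    unfolding r1 r2 r3 add.assoc[symmetric] l1 l2 using G[of "i mod s"] sp assms
    by (simp add: algebra_simps)
qed


lemma ps_bound: "(i::nat) < q*r \<Longrightarrow> (i mod q)*r + i div q < q*r"
proof -
  assume i: "i < q*r"
  hence q: "q > 0" by (cases q) auto
  have "i div q < r" using i by (simp add: less_mult_imp_div_less mult.commute)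
  hence "(i mod q)*r + i div q < (i mod q + 1)*r" by simp
  also have "\<dots> \<le> q*r" using q by (intro mult_right_mono) (auto simp: Suc_le_eq)
  finally show ?thesis .
qed

lemma rep_bound: "(\<And>i. i < b \<Longrightarrow> g i < (b::nat)) \<Longrightarrow> i < m*b \<Longrightarrow> (i div b)*b + g (i mod b) < m*b"
proof -
  assume g: "\<And>i. i < b \<Longrightarrow> g i < b" and i: "i < m*b"
  hence b: "b > 0" by (cases b) auto
  have "i div b < m" using i by (simp add: less_mult_imp_div_less)
  have "(i div b)*b + g (i mod b) < (i div b)*b + b" using g b by simp
  also have "\<dots> = (i div b + 1) * b" by simp
  also have "\<dots> \<le> m*b" using \<open>i div b < m\<close> by (intro mult_right_mono) auto
  finally show ?thesis .
qed

lemma Qhat_eq: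
  assumes blk: "is_blocking d n M"
    and unif: "\<forall>k<d. \<forall>j<length (M k). M k ! j = mu k"
    and k: "2 \<le> k" "k \<le> d"
  shows "Qhat M d k = Q_unif M mu d k"
proof -
  define K where "K = k - 1"
  have kK: "k = Suc K" and Kd: "K < d" using k unfolding K_def by auto
  define b where "b = length (M K)"
  define m where "m = mu K"
  define B where "B = BB M K"
  define D where "D = (\<Prod>t<K. mu t)"
  define N where "N = NN M K"
  define R where "R = (\<Prod>t\<in>{k..<d}. sum_list (M t))"
  have ne: "\<And>t. t < d \<Longrightarrow> M t \<noteq> []" using blk unfolding is_blocking_def by auto
  have rep: "\<And>t. t < d \<Longrightarrow> M t = replicate (length (M t)) (mu t)"
    using unif by (intro nth_equalityI) auto
  have mupos: "\<And>t. t < d \<Longrightarrow> mu t > 0"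
  proof -
    fix t assume t: "t < d"
    hence "M t ! 0 \<in> set (M t)" using ne[OF t] by simp
    hence "M t ! 0 > 0" using blk t unfolding is_blocking_def by auto
    thus "mu t > 0" using unif t ne[OF t] by auto
  qed
  have lenpos: "\<And>t. t < d \<Longrightarrow> length (M t) > 0" using ne by auto
  have sumt: "\<And>t. t < d \<Longrightarrow> sum_list (M t) = length (M t) * mu t"
    by (subst rep) (auto simp: sum_list_replicate)
  have NB: "N = B*D"
  proof -
    have "N = (\<Prod>t<K. length (M t) * mu t)" unfolding N_def NN_def
      using Kd by (intro prod.cong) (auto simp: sumt)
    also have "\<dots> = B*D" unfolding B_def D_def BB_def by (rule prod.distrib)
    finally show ?thesis .
  qed
  have vol: "\<And>l. vol M K l = D"
    unfolding vol_def D_def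
  proof (rule prod.cong)
    fix l t assume "t \<in> {..<K}"
    hence t: "t < d" using Kd by auto
    have "(l div BB M t) mod length (M t) < length (M t)" using lenpos[OF t] by simp
    thus "M t ! ((l div BB M t) mod length (M t)) = mu t" using unif t by auto
  qed simp
  have Nk: "NN M k = N*(b*m)" unfolding kK N_def NN_def b_def m_def using sumt[OF Kd] by simp
  have Nd: "NN M d = NN M k * R"
    unfolding NN_def R_def using k
    by (metis prod.atLeastLessThan_concat lessThan_atLeast0 zero_le)
  have Bp: "B > 0" unfolding B_def BB_def using lenpos Kd by (auto intro!: prod_pos)
  have Dp: "D > 0" unfolding D_def using mupos Kd by (auto intro!: prod_pos)
  have bp: "b > 0" unfolding b_def using lenpos Kd by auto
  have mp: "m > 0" unfolding m_def using mupos Kd by auto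
  have Nkp: "NN M k > 0" unfolding Nk NB using Bp Dp bp mp by simp
  have div1: "NN M d div NN M k = R" unfolding Nd using Nkp by simp
  have div2: "b * NN M d div NN M k = b*R" unfolding Nd using Nkp
    by (metis mult.left_commute nonzero_mult_div_cancel_left not_gr0)
  define s where "s = m*B*D"
  define h where "h = (\<lambda>i. (i div (D*m))*(D*m) + ((i mod (D*m)) mod D * m + (i mod (D*m)) div D))"
  define Gf where "Gf = (\<lambda>r. (h r) mod m * N + h r div m)"
  have hb: "\<And>i. i < s \<Longrightarrow> h i < s"
  proof -
    fix i assume "i < s"
    hence "i < B*(D*m)" unfolding s_def by (simp add: ac_simps)
    from rep_bound[OF ps_bound this] have "h i < B*(D*m)" unfolding h_def .
    thus "h i < s" unfolding s_def by (simp add: ac_simps)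
  qed
  have Gb: "\<And>i. i < s \<Longrightarrow> Gf i < s"
  proof -
    fix i assume "i < s"
    hence "h i < m*N" using hb unfolding s_def NB by (simp add: ac_simps)
    from ps_bound[OF this] have "Gf i < m*N" unfolding Gf_def .
    thus "Gf i < s" unfolding s_def NB by (simp add: ac_simps)
  qed
  have Gblk: "\<And>j. j < b \<Longrightarrow> Gamma_blk M k j = pm s Gf"
  proof -
    fix j assume j: "j < b"
    have Mj: "M K ! j = m" using unif Kd j unfolding b_def m_def by auto
    have "map (\<lambda>l. perfect_shuffle (vol M K l) (M K ! j)) [0..<B] = replicate B (pm (D*m) (\<lambda>i. (i mod D) * m + i div D))"
      unfolding vol Mj ps_pm by (simp add: map_replicate_const)
    hence "Gamma_blk M k j = pm (B*(D*m)) h * pm (m*N) (\<lambda>i. (i mod m) * N + i div m)"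
      unfolding Gamma_blk_def kK diff_Suc_1 B_def[symmetric] N_def[symmetric] Mj
      by (simp add: diag_rep_pm ps_bound ps_pm h_def)
    also have "\<dots> = pm s h * pm s (\<lambda>i. (i mod m) * N + i div m)"
      unfolding s_def NB by (simp add: ac_simps)
    also have "\<dots> = pm s Gf" unfolding Gf_def by (rule mult_pm[OF hb])
    finally show "Gamma_blk M k j = pm s Gf" .
  qed
  have "Gamma M k = diag_block_mat (replicate b (pm s Gf))"
    unfolding Gamma_def kK diff_Suc_1 b_def[symmetric]
    by (rule arg_cong[where f=diag_block_mat], rule nth_equalityI) (auto simp: Gblk[unfolded kK])
  also have "\<dots> = pm (b*s) (\<lambda>i. (i div s) * s + Gf (i mod s))" by (rule diag_rep_pm[OF Gb])
  finally have Gam: "Gamma M k = pm (b*s) (\<lambda>i. (i div s) * s + Gf (i mod s))" .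
  have Qh: "Qhat M d k = pm (R*(b*s)) (\<lambda>i. (i div (b*s))*(b*s) + (((i mod (b*s)) div s)*s + Gf ((i mod (b*s)) mod s)))"
  proof -
    have "kron (pm R (\<lambda>i. i)) (pm (b*s) (\<lambda>i. (i div s) * s + Gf (i mod s))) = pm (R*(b*s)) (\<lambda>i. (i div (b*s))*(b*s) + (((i mod (b*s)) div s)*s + Gf ((i mod (b*s)) mod s)))"
      by (rule kron_pm, rule rep_bound[OF Gb])
    thus ?thesis using k unfolding Qhat_def div1 Gam one_pm by simp
  qed
  have Qu: "Q_unif M mu d k = pm (b*R*(m*B)*D)
      (\<lambda>i. ((i div D) div (m*B)*(m*B) + (((i div D) mod (m*B)) mod m * B + ((i div D) mod (m*B)) div m))*D + i mod D)"
    using k unfolding Q_unif_def kK diff_Suc_1 b_def[symmetric] m_def[symmetric] B_def[symmetric] D_def[symmetric]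
      div2[unfolded kK] one_pm ps_pm
    by (simp add: kron_pm ps_bound)
  show ?thesis unfolding Qh Qu
  proof (rule pm_eq)
    show "R * (b * s) = b * R * (m * B) * D" unfolding s_def by (simp add: ac_simps)
  next
    fix i
    show "(i div (b*s))*(b*s) + (((i mod (b*s)) div s)*s + Gf ((i mod (b*s)) mod s))
     = ((i div D) div (m*B)*(m*B) + (((i div D) mod (m*B)) mod m * B + ((i div D) mod (m*B)) div m))*D + i mod D"
    proof (rule outer_arith[OF Dp mp Bp bp s_def])
      fix r show "Gf r = ((r div D) mod m * B + (r div D) div m) * D + r mod D"
        unfolding Gf_def h_def NB using G_arith[OF Dp mp Bp] by (simp add: ac_simps)
    qed
  qed
qed


lemma mpd_cong: "(\<And>j. 1 \<le> j \<Longrightarrow> j \<le> k \<Longrightarrow> F j = G j) \<Longrightarrow> mat_prod_desc s F k = mat_prod_desc s G k"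
  by (induction k) auto

theorem corollary3p2:
  fixes d :: nat and n :: "nat \<Rightarrow> nat" and M :: "nat \<Rightarrow> nat list" and mu :: "nat \<Rightarrow> nat"
  assumes "is_blocking d n M"
    and "\<forall>k<d. \<forall>j<length (M k). M k ! j = mu k"
  shows "P_M M d = mat_prod_desc (NN M d) (Q_unif M mu d) d"
  unfolding P_M_def
proof (rule mpd_cong)
  fix j assume j: "1 \<le> j" "j \<le> d"
  show "Qhat M d j = Q_unif M mu d j"
  proof (cases "j = 1")
    case True thus ?thesis unfolding Qhat_def Q_unif_def by simp
  next
    case False thus ?thesis using j Qhat_eq[OF assms] by simp
  qed
qed

end
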